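(* Fix $k\ge1$ and $\gamma>0$, and take the limit ($*$-limit) $n\to\infty$, $\theta=\theta_n\to0$ with $n\theta_n\to\gamma$. Then the following hold. (1) For every $p\le k$ and every $(k_1,\dots,k_p)\in\mathbb N^p$ with $k_1+\dots+k_p=k$, $$\mathbf P\big(\widehat K_{n,k}(1)=k_1,\dots,\widehat K_{n,k}(p)=k_p;\ P_{n,k}=p\big)\to\frac{k!}{p!}\frac{\gamma^p}{\sigma_k(\gamma)}\prod_{q=1}^p\frac{\phi_{k_q}}{k_q!}.$$ (2) For every $p\le k$, $$\mathbf P(P_{n,k}=p)\to\mathbf P^*(P_k=p):=\frac{\gamma^p}{\sigma_k(\gamma)}B_{k,p}(\phi_\bullet).$$ Equivalently, the limiting probability generating function is $\mathbf E^*(u^{P_k})=\sigma_k(\gamma u)/\sigma_k(\gamma)$, with mean $\gamma\sigma_k'(\gamma)/\sigma_k(\gamma)$. (3) The limiting conditional law is $$\frac{k!}{p!}\frac{1}{B_{k,p}(\phi_\bullet)}\prod_{q=1}^p\frac{\phi_{k_q}}{k_q!},$$ which does not depend on $\gamma$. (4) For nonnegative integers $a_1,\dots,a_k$ with $\sum_i ia_i=k$ and $p=\sum_ia_i$, $$\mathbf P\big(A_{n,k}(1)=a_1,\dots,A_{n,k}(k)=a_k;\ P_{n,k}=p\big)\to\frac{\gamma^pk!}{\sigma_k(\gamma)}\prod_{i=1}^k\frac{(\phi_i/i!)^{a_i}}{a_i!}.$$ The corresponding limiting conditional law given $P_k=p$ is $$\frac{k!}{B_{k,p}(\phi_\bullet)}\prod_{i=1}^k\frac{(\phi_i/i!)^{a_i}}{a_i!},$$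 which does not depend on $\gamma$.
   Context: Let $(\phi_m)_{m\ge1}$ be nonnegative reals with $\phi_1>0$ such that $\phi(x)=\sum_{m\ge1}\phi_m x^m/m!$ has positive radius of convergence. Define $B_{k,l}(\phi_\bullet)=\frac{k!}{l!}[x^k]\phi(x)^l$, and define the polynomials $\sigma_k(\theta)=\sum_{l=1}^kB_{k,l}(\phi_\bullet)\theta^l$, i.e. $e^{\theta\phi(x)}=1+\sum_{k\ge1}\sigma_k(\theta)x^k/k!$, with $\sigma_0\equiv1$. For integers $n,k\ge1$ and $\theta>0$, let $\mathbf K_{n,k}=(K_{n,k}(1),\dots,K_{n,k}(n))$ be a random vector in $\mathbb N_0^n$ with $$\mathbf P(\mathbf K_{n,k}=(k_1,\dots,k_n))=\frac{k!}{\sigma_k(n\theta)}\prod_{m=1}^n\frac{\sigma_{k_m}(\theta)}{k_m!}\quad\text{for } k_1+\dots+k_n=k.$$ Let $P_{n,k}:=\#\{m:K_{n,k}(m)>0\}$, and let $A_{n,k}(i):=\#\{m:K_{n,k}(m)=i\}$. On the event $P_{n,k}=p$, let $(\widehat K_{n,k}(1),\dots,\widehat K_{n,k}(p))$ be the occupancies of the $p$ nonempty boxes listed in a uniformly random order (independent of everything else). Here $\mathbb N=\{1,2,\dots\}$. *)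

theory Defs
  imports "HOL-Analysis.Analysis" "HOL-Computational_Algebra.Formal_Power_Series"
begin

definition phi_fps :: "(nat \<Rightarrow> real) \<Rightarrow> real fps" where
  "phi_fps \<phi> = Abs_fps (\<lambda>m. if m = 0 then 0 else \<phi> m / fact m)"

definition bellB :: "(nat \<Rightarrow> real) \<Rightarrow> nat \<Rightarrow> nat \<Rightarrow> real" where
  "bellB \<phi> k l = fact k / fact l * fps_nth (phi_fps \<phi> ^ l) k"

definition sigma :: "(nat \<Rightarrow> real) \<Rightarrow> nat \<Rightarrow> real \<Rightarrow> real" where
  "sigma \<phi> k \<theta> = (if k = 0 then 1 else (\<Sum>l=1..k. bellB \<phi> k l * \<theta> ^ l))"

text \<open>Occupancy vectors (k_1,...,k_n) in N_0^n with sum k, as lists of length n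
  (box m corresponds to list index m-1).\<close>
definition comps :: "nat \<Rightarrow> nat \<Rightarrow> nat list set" where
  "comps n k = {ks. length ks = n \<and> sum_list ks = k}"

definition Kprob :: "(nat \<Rightarrow> real) \<Rightarrow> nat \<Rightarrow> nat \<Rightarrow> real \<Rightarrow> nat list \<Rightarrow> real" where
  "Kprob \<phi> n k \<theta> ks =
     (if ks \<in> comps n k
      then fact k / sigma \<phi> k (real n * \<theta>) * (\<Prod>m<n. sigma \<phi> (ks ! m) \<theta> / fact (ks ! m))
      else 0)"

definition Kev :: "(nat \<Rightarrow> real) \<Rightarrow> nat \<Rightarrow> nat \<Rightarrow> real \<Rightarrow> (nat list \<Rightarrow> bool) \<Rightarrow> real" where
  "Kev \<phi> n k \<theta> E = (\<Sum>ks\<in>comps n k. if E ks then Kprob \<phi> n k \<theta> ks else 0)"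

definition nonempty_boxes :: "nat list \<Rightarrow> nat set" where
  "nonempty_boxes ks = {m. m < length ks \<and> 0 < ks ! m}"

definition Pnum :: "nat list \<Rightarrow> nat" where
  "Pnum ks = card (nonempty_boxes ks)"

definition Acount :: "nat list \<Rightarrow> nat \<Rightarrow> nat" where
  "Acount ks i = card {m. m < length ks \<and> ks ! m = i}"

text \<open>Given the occupancy vector ks, the probability that listing the nonempty boxes in a
  uniformly random order (a uniformly random enumeration js of the nonempty boxes, one of
  P! equally likely) gives the occupancy sequence kk.\<close>
definition order_prob :: "nat list \<Rightarrow> nat list \<Rightarrow> real" where
  "order_prob ks kk =
     card {js. distinct js \<and> set js = nonempty_boxes ks \<and> map (\<lambda>j. ks ! j) js = kk}
       / fact (Pnum ks)"

text \<open>P(hatK_{n,k}(1)=k_1,...,hatK_{n,k}(p)=k_p; P_{n,k}=p), p = length kk.\<close>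
definition hatK_prob :: "(nat \<Rightarrow> real) \<Rightarrow> nat \<Rightarrow> nat \<Rightarrow> real \<Rightarrow> nat list \<Rightarrow> real" where
  "hatK_prob \<phi> n k \<theta> kk =
     (\<Sum>ks\<in>comps n k. if Pnum ks = length kk then Kprob \<phi> n k \<theta> ks * order_prob ks kk else 0)"

end

theory Submission imports Defs "HOL-Combinatorics.Multiset_Permutations" begin

definition W :: "nat \<Rightarrow> nat \<Rightarrow> nat list set" where
  "W p k = {kk. length kk = p \<and> (\<forall>x\<in>set kk. 0 < x) \<and> sum_list kk = k}"

lemma W_subset: "W p k \<subseteq> {xs. set xs \<subseteq> {0..k} \<and> length xs = p}"
  unfolding W_def using member_le_sum_list by fastforce

lemma finite_W: "finite (W p k)"
  by (rule finite_subset[OF W_subset]) (simp add: finite_lists_length_eq)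

lemma W_Suc_bij: "bij_betw (\<lambda>(i,kk). i # kk) (Sigma {1..k} (\<lambda>i. W p (k-i))) (W (Suc p) k)"
proof (rule bij_betw_byWitness[where f'="\<lambda>kk. (hd kk, tl kk)"])
  show "\<forall>a\<in>Sigma {1..k} (\<lambda>i. W p (k - i)). (hd ((\<lambda>(i, kk). i # kk) a), tl ((\<lambda>(i, kk). i # kk) a)) = a"
    by auto
  show "\<forall>a'\<in>W (Suc p) k. (\<lambda>(i, kk). i # kk) (hd a', tl a') = a'"
    unfolding W_def by (auto simp: length_Suc_conv)
  show "(\<lambda>(i, kk). i # kk) ` Sigma {1..k} (\<lambda>i. W p (k - i)) \<subseteq> W (Suc p) k"
    unfolding W_def by auto
  show "(\<lambda>kk. (hd kk, tl kk)) ` W (Suc p) k \<subseteq> Sigma {1..k} (\<lambda>i. W p (k - i))"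
    unfolding W_def by (auto simp: length_Suc_conv)
qed

lemma fps_pow_nth:
  fixes f :: "'a::comm_ring_1 fps"
  assumes f0: "fps_nth f 0 = 0"
  shows "fps_nth (f ^ p) k = (\<Sum>kk\<in>W p k. prod_list (map (\<lambda>j. fps_nth f j) kk))"
proof (induction p arbitrary: k)
  case 0
  have "W 0 k = (if k = 0 then {[]} else {})" unfolding W_def by auto
  then show ?case by simp
next
  case (Suc p)
  have "fps_nth (f ^ Suc p) k = (\<Sum>i=0..k. fps_nth f i * fps_nth (f ^ p) (k - i))"
    by (simp add: fps_mult_nth)
  also have "\<dots> = (\<Sum>i=1..k. fps_nth f i * fps_nth (f ^ p) (k - i))"
    by (rule sum.mono_neutral_right) (auto simp: f0 Suc_le_eq)
  also have "\<dots> = (\<Sum>i=1..k. \<Sum>kk\<in>W p (k-i). prod_list (map (\<lambda>j. fps_nth f j) (i # kk)))"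
    by (simp add: Suc sum_distrib_left)
  also have "\<dots> = (\<Sum>(i,kk)\<in>Sigma {1..k} (\<lambda>i. W p (k-i)). prod_list (map (\<lambda>j. fps_nth f j) (i # kk)))"
    by (rule sum.Sigma) (auto simp: finite_W)
  also have "\<dots> = (\<Sum>kk\<in>W (Suc p) k. prod_list (map (\<lambda>j. fps_nth f j) kk))"
    using sum.reindex_bij_betw[OF W_Suc_bij, of "\<lambda>kk. prod_list (map (\<lambda>j. fps_nth f j) kk)"]
    by (simp add: case_prod_beta')
  finally show ?case .
qed

lemma phi_nth: "fps_nth (phi_fps \<phi>) j = (if j = 0 then 0 else \<phi> j / fact j)"
  by (simp add: phi_fps_def)

lemma phi_nth': "fps_nth (phi_fps \<phi>) = (\<lambda>j. if j = 0 then 0 else \<phi> j / fact j)"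
  by (rule ext) (simp add: phi_fps_def)

lemma bellB_W: "bellB \<phi> k l = fact k / fact l *
   (\<Sum>kk\<in>W l k. prod_list (map (\<lambda>j. if j = 0 then 0 else \<phi> j / fact j) kk))"
  unfolding bellB_def by (subst fps_pow_nth) (simp_all add: phi_nth phi_nth')

lemma prod_list_nonneg_phi:
  assumes "\<And>m. m \<ge> 1 \<Longrightarrow> \<phi> m \<ge> (0::real)"
  shows "prod_list (map (\<lambda>j. if j = 0 then 0 else \<phi> j / fact j) kk) \<ge> 0"
  using assms by (induction kk) auto

lemma bellB_nonneg:
  assumes "\<And>m. m \<ge> 1 \<Longrightarrow> \<phi> m \<ge> (0::real)"
  shows "bellB \<phi> k l \<ge> 0"
  unfolding bellB_W using prod_list_nonneg_phi[OF assms]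
  by (intro mult_nonneg_nonneg sum_nonneg) auto

lemma bellB_diag:
  assumes "\<And>m. m \<ge> 1 \<Longrightarrow> \<phi> m \<ge> (0::real)" and "\<phi> 1 > 0"
  shows "bellB \<phi> k k > 0"
proof -
  have r: "replicate k 1 \<in> W k k" unfolding W_def by (simp add: sum_list_replicate)
  have "0 < prod_list (map (\<lambda>j. if j = 0 then 0 else \<phi> j / fact j) (replicate k (1::nat)))"
    using assms(2) by simp
  also have "\<dots> \<le> (\<Sum>kk\<in>W k k. prod_list (map (\<lambda>j. if j = 0 then 0 else \<phi> j / fact j) kk))"
    by (rule member_le_sum[OF r]) (use prod_list_nonneg_phi[OF assms(1)] finite_W in auto)
  finally show ?thesis unfolding bellB_W by simp
qed

lemma bellB_zero: "k \<ge> 1 \<Longrightarrow> bellB \<phi> k 0 = 0"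
  unfolding bellB_def by simp

lemma bellB_one: "j \<ge> 1 \<Longrightarrow> bellB \<phi> j 1 = \<phi> j"
  unfolding bellB_def by (simp add: phi_nth)

lemma sigma_pos:
  assumes "\<And>m. m \<ge> 1 \<Longrightarrow> \<phi> m \<ge> (0::real)" and "\<phi> 1 > 0" and "x > 0"
  shows "sigma \<phi> k x > 0"
proof (cases "k = 0")
  case False
  have "0 < bellB \<phi> k k" by (rule bellB_diag) (use assms in auto)
  then have "0 < bellB \<phi> k k * x ^ k" using assms(3) by simp
  also have "\<dots> \<le> (\<Sum>l=1..k. bellB \<phi> k l * x ^ l)"
    by (rule member_le_sum) (use False bellB_nonneg[OF assms(1)] assms(3) in auto)
  finally show ?thesis using False by (simp add: sigma_def)
qed (simp add: sigma_def)

lemma sigma_div: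
  assumes "j \<ge> 1" "x \<noteq> 0"
  shows "sigma \<phi> j x / x = (\<Sum>l=1..j. bellB \<phi> j l * x ^ (l - 1))"
proof -
  have "sigma \<phi> j x = (\<Sum>l=1..j. bellB \<phi> j l * x ^ (l - 1) * x)"
    using assms by (auto simp: sigma_def intro!: sum.cong simp: mult.assoc power_eq_if)
  then show ?thesis using assms by (simp add: sum_distrib_right[symmetric])
qed

lemma sigma_div_lim:
  assumes "j \<ge> 1" "\<And>n. t n > 0" "t \<longlonglongrightarrow> 0"
  shows "(\<lambda>n. sigma \<phi> j (t n) / t n) \<longlonglongrightarrow> \<phi> j"
proof -
  have l: "(\<lambda>n. (\<Sum>l=1..j. bellB \<phi> j l * t n ^ (l - 1))) \<longlonglongrightarrow> (\<Sum>l=1..j. bellB \<phi> j l * 0 ^ (l - 1))"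
    by (intro tendsto_intros assms)
  have "(\<Sum>l=1..j. bellB \<phi> j l * (0::real) ^ (l - 1)) = (\<Sum>l=1..j. if l = 1 then bellB \<phi> j l else 0)"
    by (intro sum.cong) auto
  also have "\<dots> = \<phi> j" unfolding sum.delta using assms(1) bellB_one[of j \<phi>] by auto
  finally have v: "(\<Sum>l=1..j. bellB \<phi> j l * (0::real) ^ (l - 1)) = \<phi> j" .
  have f: "(\<lambda>n. sigma \<phi> j (t n) / t n) = (\<lambda>n. (\<Sum>l=1..j. bellB \<phi> j l * t n ^ (l - 1)))"
  proof
    fix n
    have "t n \<noteq> 0" using assms(2)[of n] by simp
    then show "sigma \<phi> j (t n) / t n = (\<Sum>l=1..j. bellB \<phi> j l * t n ^ (l - 1))"
      by (rule sigma_div[OF assms(1)])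
  qed
  show ?thesis unfolding f using l unfolding v .
qed

definition msetnz :: "nat list \<Rightarrow> nat multiset" where
  "msetnz ks = image_mset (\<lambda>m. ks ! m) (mset_set (nonempty_boxes ks))"

definition SF :: "nat \<Rightarrow> (nat multiset \<Rightarrow> bool) \<Rightarrow> nat list set" where
  "SF k F = {kk. (\<forall>x\<in>set kk. 0 < x) \<and> sum_list kk = k \<and> F (mset kk)}"

lemma length_le_sum: "(\<forall>x\<in>set xs. 0 < (x::nat)) \<Longrightarrow> length xs \<le> sum_list xs"
  by (induction xs) auto

lemma finite_SF: "finite (SF k F)"
proof (rule finite_subset)
  show "SF k F \<subseteq> {xs. set xs \<subseteq> {0..k} \<and> length xs \<le> k}"
    unfolding SF_def using length_le_sum member_le_sum_list by fastforce
qed (simp add: finite_lists_length_le)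

lemma finite_comps: "finite (comps n k)"
proof (rule finite_subset)
  show "comps n k \<subseteq> {xs. set xs \<subseteq> {0..k} \<and> length xs = n}"
    unfolding comps_def using member_le_sum_list by fastforce
qed (simp add: finite_lists_length_eq)

lemma nb_sub: "nonempty_boxes ks \<subseteq> {..<length ks}"
  unfolding nonempty_boxes_def by auto

lemma finite_nb: "finite (nonempty_boxes ks)"
  using finite_subset[OF nb_sub] by simp

lemma sum_nb: "sum (\<lambda>j. ks ! j) (nonempty_boxes ks) = sum_list ks"
proof -
  have "sum (\<lambda>j. ks ! j) (nonempty_boxes ks) = sum (\<lambda>j. ks ! j) {..<length ks}"
    by (rule sum.mono_neutral_left) (auto simp: nonempty_boxes_def)
  also have "\<dots> = sum_list ks" by (simp add: sum_list_sum_nth atLeast0LessThan)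
  finally show ?thesis .
qed

lemma perm_map_props:
  assumes "set js = nonempty_boxes ks" "distinct js"
  shows "(\<forall>x\<in>set (map (\<lambda>j. ks ! j) js). 0 < x)"
    "sum_list (map (\<lambda>j. ks ! j) js) = sum_list ks"
    "mset (map (\<lambda>j. ks ! j) js) = msetnz ks"
    "length js = Pnum ks"
proof -
  show "(\<forall>x\<in>set (map (\<lambda>j. ks ! j) js). 0 < x)" using assms(1) by (auto simp: nonempty_boxes_def)
  show "sum_list (map (\<lambda>j. ks ! j) js) = sum_list ks"
    using sum.distinct_set_conv_list[OF assms(2), of "\<lambda>j. ks ! j"] assms(1) sum_nb by simp
  show "mset (map (\<lambda>j. ks ! j) js) = msetnz ks"
    unfolding msetnz_def using assms by (metis mset_map mset_set_set)
  show "length js = Pnum ks" unfolding Pnum_def using assms distinct_card by metis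
qed

lemma inner_sum:
  assumes ks: "ks \<in> comps n k"
  shows "(\<Sum>kk\<in>SF k F. if Pnum ks = length kk then order_prob ks kk else 0)
     = (if F (msetnz ks) then 1 else 0)"
proof -
  define P where "P = permutations_of_set (nonempty_boxes ks)"
  define g where "g = (\<lambda>j. ks ! j)"
  define Pf where "Pf = {js\<in>P. map g js \<in> SF k F}"
  have sumk: "sum_list ks = k" using ks by (simp add: comps_def)
  have Pprops: "js \<in> P \<Longrightarrow> length js = Pnum ks \<and> (map g js \<in> SF k F \<longleftrightarrow> F (msetnz ks))" for js
    using perm_map_props[of js ks] sumk unfolding P_def permutations_of_set_def SF_def g_def by auto
  have finP: "finite P" unfolding P_def by (simp add: finite_nb)
  have "(\<Sum>kk\<in>SF k F. if Pnum ks = length kk then order_prob ks kk else 0)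
      = (\<Sum>kk\<in>SF k F. real (card {js\<in>Pf. map g js = kk}) / fact (Pnum ks))"
  proof (rule sum.cong[OF refl])
    fix kk assume kk: "kk \<in> SF k F"
    have e: "{js. distinct js \<and> set js = nonempty_boxes ks \<and> map (\<lambda>j. ks ! j) js = kk} = {js\<in>Pf. map g js = kk}"
      using kk unfolding Pf_def P_def permutations_of_set_def g_def by auto
    show "(if Pnum ks = length kk then order_prob ks kk else 0) = real (card {js\<in>Pf. map g js = kk}) / fact (Pnum ks)"
    proof (cases "Pnum ks = length kk")
      case True then show ?thesis unfolding order_prob_def e by simp
    next
      case False then have "{js\<in>Pf. map g js = kk} = {}" using Pprops unfolding Pf_def by auto
      then have c0: "card {js\<in>Pf. map g js = kk} = 0" by (simp only: card.empty)
      show ?thesis using False c0 by simp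
    qed
  qed
  also have "\<dots> = real (\<Sum>kk\<in>SF k F. card {js\<in>Pf. map g js = kk}) / fact (Pnum ks)"
    by (simp add: sum_divide_distrib)
  also have "(\<Sum>kk\<in>SF k F. card {js\<in>Pf. map g js = kk}) = card Pf"
  proof -
    have "(\<Sum>kk\<in>SF k F. \<Sum>js\<in>{js\<in>Pf. map g js = kk}. (1::nat)) = (\<Sum>js\<in>Pf. 1)"
      by (rule sum.group) (auto simp: finite_SF Pf_def finP)
    then show ?thesis by simp
  qed
  also have "Pf = (if F (msetnz ks) then P else {})" using Pprops unfolding Pf_def by auto
  finally show ?thesis unfolding P_def by (simp add: finite_nb Pnum_def)
qed

lemma mult_if0: "(a::real) * (if c then b else 0) = (if c then a * b else 0)" by simp

lemma Kev_decomp: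
  assumes "\<forall>ks\<in>comps n k. E ks = F (msetnz ks)"
  shows "Kev \<phi> n k \<theta> E = (\<Sum>kk\<in>SF k F. hatK_prob \<phi> n k \<theta> kk)"
proof -
  have "(\<Sum>kk\<in>SF k F. hatK_prob \<phi> n k \<theta> kk)
     = (\<Sum>ks\<in>comps n k. \<Sum>kk\<in>SF k F. if Pnum ks = length kk then Kprob \<phi> n k \<theta> ks * order_prob ks kk else 0)"
    unfolding hatK_prob_def by (rule sum.swap)
  also have "\<dots> = (\<Sum>ks\<in>comps n k. Kprob \<phi> n k \<theta> ks * (\<Sum>kk\<in>SF k F. if Pnum ks = length kk then order_prob ks kk else 0))"
    by (simp only: sum_distrib_left mult_if0)
  also have "\<dots> = (\<Sum>ks\<in>comps n k. if E ks then Kprob \<phi> n k \<theta> ks else 0)"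
    using assms by (intro sum.cong refl) (simp add: inner_sum)
  finally show ?thesis unfolding Kev_def by simp
qed

definition D :: "nat \<Rightarrow> nat \<Rightarrow> nat list set" where
  "D n p = {js. length js = p \<and> distinct js \<and> set js \<subseteq> {..<n}}"

definition ksOf :: "nat \<Rightarrow> nat list \<Rightarrow> nat list \<Rightarrow> nat list" where
  "ksOf n kk js = map (\<lambda>m. \<Sum>q<length kk. if js ! q = m then kk ! q else 0) [0..<n]"

lemma finite_D: "finite (D n p)"
proof (rule finite_subset)
  show "D n p \<subseteq> {xs. set xs \<subseteq> {..<n} \<and> length xs = p}" unfolding D_def by auto
qed (simp add: finite_lists_length_eq)

lemma ksOf_len [simp]: "length (ksOf n kk js) = n"
  by (simp add: ksOf_def)

lemma ksOf_at:
  assumes "js \<in> D n (length kk)" "q < length kk"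
  shows "ksOf n kk js ! (js ! q) = kk ! q"
proof -
  have js: "length js = length kk" "distinct js" "set js \<subseteq> {..<n}" using assms(1) by (auto simp: D_def)
  have "js ! q \<in> set js" using js(1) assms(2) by simp
  then have lt: "js ! q < n" using js(3) by blast
  have "ksOf n kk js ! (js ! q) = (\<Sum>q'<length kk. if js ! q' = js ! q then kk ! q' else 0)"
    using lt by (simp add: ksOf_def)
  also have "\<dots> = (\<Sum>q'<length kk. if q' = q then kk ! q' else 0)"
    using js assms(2) by (intro sum.cong refl) (simp add: nth_eq_iff_index_eq)
  also have "\<dots> = kk ! q" using assms(2) by simp
  finally show ?thesis .
qed

lemma ksOf_out:
  assumes "js \<in> D n (length kk)" "m < n" "m \<notin> set js"
  shows "ksOf n kk js ! m = 0"
proof -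
  have js: "length js = length kk" using assms(1) by (auto simp: D_def)
  have "\<And>q. q < length kk \<Longrightarrow> js ! q \<noteq> m" using assms(3) js nth_mem by metis
  then show ?thesis using assms(2) by (simp add: ksOf_def)
qed

lemma ksOf_nb:
  assumes "js \<in> D n (length kk)" "\<forall>x\<in>set kk. 0 < x"
  shows "nonempty_boxes (ksOf n kk js) = set js"
proof
  show "nonempty_boxes (ksOf n kk js) \<subseteq> set js"
    using ksOf_out[OF assms(1)] unfolding nonempty_boxes_def by force
  show "set js \<subseteq> nonempty_boxes (ksOf n kk js)"
  proof
    fix m assume "m \<in> set js"
    then obtain q where q: "q < length js" "m = js ! q" by (metis in_set_conv_nth)
    have js: "length js = length kk" "set js \<subseteq> {..<n}" using assms(1) by (auto simp: D_def)
    have "ksOf n kk js ! m = kk ! q" using ksOf_at[OF assms(1)] q js by simp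
    moreover have "0 < kk ! q" using assms(2) q js by simp
    moreover have "m \<in> set js" using q by simp
    then have "m < n" using js(2) by blast
    ultimately show "m \<in> nonempty_boxes (ksOf n kk js)" by (simp add: nonempty_boxes_def)
  qed
qed

lemma ksOf_sum:
  assumes "js \<in> D n (length kk)"
  shows "sum_list (ksOf n kk js) = sum_list kk"
proof -
  have js: "length js = length kk" "set js \<subseteq> {..<n}" using assms(1) by (auto simp: D_def)
  have "sum_list (ksOf n kk js) = (\<Sum>m<n. \<Sum>q<length kk. if js ! q = m then kk ! q else 0)"
    unfolding ksOf_def interv_sum_list_conv_sum_set_nat by (simp add: atLeast0LessThan)
  also have "\<dots> = (\<Sum>q<length kk. \<Sum>m<n. if js ! q = m then kk ! q else 0)"
    by (rule sum.swap)
  also have "\<dots> = (\<Sum>q<length kk. kk ! q)"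
  proof (intro sum.cong refl)
    fix q assume "q \<in> {..<length kk}"
    then have "js ! q \<in> set js" using js(1) by simp
    then have "js ! q < n" using js(2) by blast
    then show "(\<Sum>m<n. if js ! q = m then kk ! q else 0) = kk ! q" by simp
  qed
  also have "\<dots> = sum_list kk" by (simp only: sum_list_sum_nth atLeast0LessThan)
  finally show ?thesis .
qed

lemma ksOf_Pnum:
  assumes "js \<in> D n (length kk)" "\<forall>x\<in>set kk. 0 < x"
  shows "Pnum (ksOf n kk js) = length kk"
proof -
  have "distinct js" "length js = length kk" using assms(1) by (auto simp: D_def)
  then show ?thesis using ksOf_nb[OF assms] distinct_card unfolding Pnum_def by metis
qed

lemma ksOf_prod:
  assumes "js \<in> D n (length kk)"
  shows "(\<Prod>m<n. sigma \<phi> (ksOf n kk js ! m) t / fact (ksOf n kk js ! m))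
       = (\<Prod>q<length kk. sigma \<phi> (kk ! q) t / fact (kk ! q))"
proof -
  have js: "length js = length kk" "distinct js" "set js \<subseteq> {..<n}" using assms(1) by (auto simp: D_def)
  let ?f = "\<lambda>m. sigma \<phi> (ksOf n kk js ! m) t / fact (ksOf n kk js ! m)"
  have "(\<Prod>m<n. ?f m) = (\<Prod>m\<in>set js. ?f m)"
  proof (rule prod.mono_neutral_right)
    show "finite {..<n}" by simp
    show "set js \<subseteq> {..<n}" using js(3) .
    show "\<forall>m\<in>{..<n} - set js. ?f m = 1"
    proof
      fix m assume m: "m \<in> {..<n} - set js"
      then have "ksOf n kk js ! m = 0" using ksOf_out[OF assms(1)] by blast
      then show "?f m = 1" by (simp add: sigma_def)
    qed
  qed
  also have "set js = (\<lambda>q. js ! q) ` {..<length kk}" using js by (auto simp: set_conv_nth)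
  also have "(\<Prod>m\<in>(\<lambda>q. js ! q) ` {..<length kk}. ?f m) = (\<Prod>q<length kk. ?f (js ! q))"
  proof -
    have inj: "inj_on (\<lambda>q. js ! q) {..<length kk}" using js by (auto simp: inj_on_def nth_eq_iff_index_eq)
    show ?thesis by (simp add: prod.reindex[OF inj])
  qed
  also have "\<dots> = (\<Prod>q<length kk. sigma \<phi> (kk ! q) t / fact (kk ! q))"
    by (rule prod.cong[OF refl]) (simp add: ksOf_at[OF assms(1)])
  finally show ?thesis .
qed

lemma ksOf_char:
  assumes ks: "ks \<in> comps n k" and pos: "\<forall>x\<in>set kk. 0 < x"
  shows "(js \<in> D n (length kk) \<and> ksOf n kk js = ks) \<longleftrightarrow>
    (Pnum ks = length kk \<and> distinct js \<and> set js = nonempty_boxes ks \<and> map (\<lambda>j. ks ! j) js = kk)"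
proof
  assume a: "js \<in> D n (length kk) \<and> ksOf n kk js = ks"
  then have js: "length js = length kk" "distinct js" by (auto simp: D_def)
  show "Pnum ks = length kk \<and> distinct js \<and> set js = nonempty_boxes ks \<and> map (\<lambda>j. ks ! j) js = kk"
    using a js ksOf_Pnum[OF _ pos] ksOf_nb[OF _ pos] ksOf_at[of js n kk]
    by (auto intro!: nth_equalityI)
next
  assume a: "Pnum ks = length kk \<and> distinct js \<and> set js = nonempty_boxes ks \<and> map (\<lambda>j. ks ! j) js = kk"
  have len: "length ks = n" using ks by (simp add: comps_def)
  have jl: "length js = length kk" using a distinct_card unfolding Pnum_def by (metis length_map)
  have D: "js \<in> D n (length kk)" using a jl nb_sub[of ks] len by (auto simp: D_def)
  have "ksOf n kk js = ks"
  proof (rule nth_equalityI)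
    show "length (ksOf n kk js) = length ks" using len by simp
    fix m assume "m < length (ksOf n kk js)"
    then have m: "m < n" by simp
    show "ksOf n kk js ! m = ks ! m"
    proof (cases "m \<in> set js")
      case True
      then obtain q where q: "q < length js" "m = js ! q" by (metis in_set_conv_nth)
      have "ksOf n kk js ! m = kk ! q" using ksOf_at[OF D] q jl by simp
      also have "\<dots> = ks ! m" using a q by (metis nth_map)
      finally show ?thesis .
    next
      case False
      then have "ks ! m = 0" using a m len by (auto simp: nonempty_boxes_def)
      then show ?thesis using ksOf_out[OF D m False] by simp
    qed
  qed
  then show "js \<in> D n (length kk) \<and> ksOf n kk js = ks" using D by simp
qed

lemma hatK_formula:
  assumes pos: "\<forall>x\<in>set kk. 0 < x" and sk: "sum_list kk = k"
  shows "hatK_prob \<phi> n k t kk = real (card (D n (length kk))) / fact (length kk) *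
     (fact k / sigma \<phi> k (real n * t) * (\<Prod>q<length kk. sigma \<phi> (kk ! q) t / fact (kk ! q)))"
proof -
  define p where "p = length kk"
  define K0 where "K0 = fact k / sigma \<phi> k (real n * t) * (\<Prod>q<length kk. sigma \<phi> (kk ! q) t / fact (kk ! q))"
  define J where "J ks = {js. distinct js \<and> set js = nonempty_boxes ks \<and> map (\<lambda>j. ks ! j) js = kk}" for ks
  have inC: "js \<in> D n p \<Longrightarrow> ksOf n kk js \<in> comps n k" for js
    using ksOf_sum[of js n kk] sk unfolding p_def comps_def by simp
  have KK: "js \<in> D n p \<Longrightarrow> Kprob \<phi> n k t (ksOf n kk js) = K0" for js
    using inC[of js] ksOf_prod[of js n kk \<phi> t] unfolding Kprob_def K0_def p_def by simp
  have "(\<Sum>js\<in>D n p. K0) = (\<Sum>ks\<in>comps n k. \<Sum>js\<in>{js\<in>D n p. ksOf n kk js = ks}. K0)"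
    by (rule sum.group[symmetric]) (use finite_D finite_comps inC in auto)
  also have "\<dots> = (\<Sum>ks\<in>comps n k. if Pnum ks = p then Kprob \<phi> n k t ks * real (card (J ks)) else 0)"
  proof (intro sum.cong refl)
    fix ks assume ks: "ks \<in> comps n k"
    have e: "{js\<in>D n p. ksOf n kk js = ks} = (if Pnum ks = p then J ks else {})"
      using ksOf_char[OF ks pos] unfolding J_def p_def by auto
    show "(\<Sum>js\<in>{js\<in>D n p. ksOf n kk js = ks}. K0) = (if Pnum ks = p then Kprob \<phi> n k t ks * real (card (J ks)) else 0)"
    proof (cases "Pnum ks = p \<and> J ks \<noteq> {}")
      case True
      then obtain js where js: "js \<in> J ks" by auto
      then have "js \<in> D n p \<and> ksOf n kk js = ks" using ksOf_char[OF ks pos] True unfolding J_def p_def by auto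
      then have "Kprob \<phi> n k t ks = K0" using KK by blast
      then show ?thesis using e True by simp
    next
      case False
      then show ?thesis using e by auto
    qed
  qed
  finally have main: "real (card (D n p)) * K0 = (\<Sum>ks\<in>comps n k. if Pnum ks = p then Kprob \<phi> n k t ks * real (card (J ks)) else 0)"
    by simp
  have "hatK_prob \<phi> n k t kk = (\<Sum>ks\<in>comps n k. if Pnum ks = p then Kprob \<phi> n k t ks * real (card (J ks)) else 0) / fact p"
    unfolding hatK_prob_def order_prob_def sum_divide_distrib J_def p_def
    by (intro sum.cong refl) auto
  also have "\<dots> = real (card (D n p)) / fact p * K0" using main by simp
  finally show ?thesis unfolding p_def K0_def .
qed

lemma prod_top_real:
  "p \<le> n \<Longrightarrow> real (\<Prod>{n - p + 1..n}) = (\<Prod>i<p. real n - real i)"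
proof (induction p)
  case 0 then show ?case by simp
next
  case (Suc p)
  have e1: "n - Suc p + 1 = n - p" using Suc.prems by simp
  have e: "{n - p..n} = insert (n - p) {n - p + 1..n}" using Suc.prems by auto
  have f: "finite {n - p + 1..n}" "n - p \<notin> {n - p + 1..n}" by auto
  have "\<Prod>{n - Suc p + 1..n} = (n - p) * \<Prod>{n - p + 1..n}"
    unfolding e1 e prod.insert[OF f] ..
  then have "real (\<Prod>{n - Suc p + 1..n}) = real (n - p) * real (\<Prod>{n - p + 1..n})"
    by (simp only: of_nat_mult)
  also have "\<dots> = (real n - real p) * (\<Prod>i<p. real n - real i)"
    using Suc.IH Suc.prems by (simp only: of_nat_diff Suc_leD)
  also have "\<dots> = (\<Prod>i<Suc p. real n - real i)"
    by (simp only: prod.lessThan_Suc mult.commute)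
  finally show ?case .
qed

lemma card_D_prod:
  assumes "p \<le> n"
  shows "real (card (D n p)) = (\<Prod>i<p. real n - real i)"
proof -
  have c: "card (D n p) = \<Prod>{n - p + 1..n}"
    unfolding D_def using card_lists_distinct_length_eq[of "{..<n}" p] assms
    by (metis card_lessThan finite_lessThan)
  show ?thesis by (simp only: c prod_top_real[OF assms])
qed

lemma card_D_lim:
  assumes "\<theta> \<longlonglongrightarrow> 0" "(\<lambda>n. real n * \<theta> n) \<longlonglongrightarrow> \<gamma>"
  shows "(\<lambda>n. real (card (D n p)) * \<theta> n ^ p) \<longlonglongrightarrow> \<gamma> ^ p"
proof -
  have "(\<lambda>n. \<Prod>i<p. real n * \<theta> n - real i * \<theta> n) \<longlonglongrightarrow> (\<Prod>i<p. \<gamma> - real i * 0)"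
    by (intro tendsto_intros assms)
  then have l: "(\<lambda>n. \<Prod>i<p. real n * \<theta> n - real i * \<theta> n) \<longlonglongrightarrow> \<gamma> ^ p" by simp
  have ev: "\<forall>\<^sub>F n in sequentially. (\<Prod>i<p. real n * \<theta> n - real i * \<theta> n) = real (card (D n p)) * \<theta> n ^ p"
  proof (rule eventually_sequentiallyI[of p])
    fix n assume "p \<le> n"
    then have "real (card (D n p)) * \<theta> n ^ p = (\<Prod>i<p. real n - real i) * (\<Prod>i<p. \<theta> n)"
      by (simp only: card_D_prod prod_constant card_lessThan)
    also have "\<dots> = (\<Prod>i<p. real n * \<theta> n - real i * \<theta> n)"
      by (simp only: prod.distrib[symmetric] left_diff_distrib)
    finally show "(\<Prod>i<p. real n * \<theta> n - real i * \<theta> n) = real (card (D n p)) * \<theta> n ^ p" by simp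
  qed
  show ?thesis using Lim_transform_eventually[OF l ev] .
qed

lemma hatK_lim:
  assumes phi_nonneg: "\<And>m. m \<ge> 1 \<Longrightarrow> \<phi> m \<ge> 0"
    and phi1: "\<phi> 1 > 0"
    and k: "k \<ge> 1" and \<gamma>: "\<gamma> > 0"
    and \<theta>_pos: "\<And>n. \<theta> n > 0"
    and \<theta>_lim: "\<theta> \<longlonglongrightarrow> 0"
    and n\<theta>_lim: "(\<lambda>n. real n * \<theta> n) \<longlonglongrightarrow> \<gamma>"
    and pos: "\<forall>x\<in>set kk. 0 < x" and sk: "sum_list kk = k"
  shows "(\<lambda>n. hatK_prob \<phi> n k (\<theta> n) kk) \<longlonglongrightarrow>
          fact k / fact (length kk) * \<gamma> ^ length kk / sigma \<phi> k \<gamma>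
            * (\<Prod>q<length kk. \<phi> (kk ! q) / fact (kk ! q))"
proof -
  define p where "p = length kk"
  have sg: "sigma \<phi> k \<gamma> > 0" by (rule sigma_pos) (use assms in auto)
  have slim: "(\<lambda>n. sigma \<phi> k (real n * \<theta> n)) \<longlonglongrightarrow> sigma \<phi> k \<gamma>"
    using k unfolding sigma_def by (simp, intro tendsto_intros n\<theta>_lim)
  have plim: "(\<lambda>n. \<Prod>q<p. sigma \<phi> (kk ! q) (\<theta> n) / \<theta> n / fact (kk ! q)) \<longlonglongrightarrow> (\<Prod>q<p. \<phi> (kk ! q) / fact (kk ! q))"
  proof (intro tendsto_prod tendsto_divide tendsto_const)
    fix q assume "q \<in> {..<p}"
    then have "kk ! q \<ge> 1" using pos p_def by (simp add: Suc_le_eq)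
    then show "(\<lambda>n. sigma \<phi> (kk ! q) (\<theta> n) / \<theta> n) \<longlonglongrightarrow> \<phi> (kk ! q)"
      by (rule sigma_div_lim) (use assms in auto)
  qed simp
  have lim: "(\<lambda>n. (real (card (D n p)) * \<theta> n ^ p) / fact p * (fact k / sigma \<phi> k (real n * \<theta> n)
        * (\<Prod>q<p. sigma \<phi> (kk ! q) (\<theta> n) / \<theta> n / fact (kk ! q))))
     \<longlonglongrightarrow> \<gamma> ^ p / fact p * (fact k / sigma \<phi> k \<gamma> * (\<Prod>q<p. \<phi> (kk ! q) / fact (kk ! q)))"
    using sg by (intro tendsto_intros card_D_lim assms slim plim) auto
  have eq: "hatK_prob \<phi> n k (\<theta> n) kk = (real (card (D n p)) * \<theta> n ^ p) / fact p * (fact k / sigma \<phi> k (real n * \<theta> n)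
        * (\<Prod>q<p. sigma \<phi> (kk ! q) (\<theta> n) / \<theta> n / fact (kk ! q)))" for n
  proof -
    have tn: "\<theta> n \<noteq> 0" using \<theta>_pos[of n] by simp
    have "(\<Prod>q<p. sigma \<phi> (kk ! q) (\<theta> n) / fact (kk ! q)) = (\<Prod>q<p. \<theta> n * (sigma \<phi> (kk ! q) (\<theta> n) / \<theta> n / fact (kk ! q)))"
      using tn by (intro prod.cong refl) simp
    also have "\<dots> = \<theta> n ^ p * (\<Prod>q<p. sigma \<phi> (kk ! q) (\<theta> n) / \<theta> n / fact (kk ! q))"
      by (simp only: prod.distrib prod_constant card_lessThan)
    finally show ?thesis unfolding hatK_formula[OF pos sk] p_def[symmetric] by simp
  qed
  have v: "\<gamma> ^ p / fact p * (fact k / sigma \<phi> k \<gamma> * (\<Prod>q<p. \<phi> (kk ! q) / fact (kk ! q)))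
     = fact k / fact p * \<gamma> ^ p / sigma \<phi> k \<gamma> * (\<Prod>q<p. \<phi> (kk ! q) / fact (kk ! q))"
    by (simp add: field_simps)
  show ?thesis unfolding eq p_def[symmetric] using lim unfolding v .
qed

lemma prod_list_nth: "prod_list (map f xs) = (\<Prod>q<length xs. f (xs ! q))"
  by (induction xs) (simp_all add: prod.lessThan_Suc_shift del: prod.lessThan_Suc)

lemma cprod_pos:
  assumes "\<forall>x\<in>set kk. 0 < x"
  shows "(\<Prod>q<length kk. \<phi> (kk ! q) / fact (kk ! q)) = prod_list (map (\<lambda>j. if j = 0 then 0 else \<phi> j / fact j) kk)"
  unfolding prod_list_nth
proof (intro prod.cong refl)
  fix q assume "q \<in> {..<length kk}"
  then have "0 < kk ! q" using assms by simp
  then show "\<phi> (kk ! q) / fact (kk ! q) = (if kk ! q = 0 then 0 else \<phi> (kk ! q) / fact (kk ! q))" by simp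
qed

lemma size_msetnz: "size (msetnz ks) = Pnum ks"
  by (simp add: msetnz_def Pnum_def)

lemma count_msetnz:
  assumes "i \<ge> 1"
  shows "count (msetnz ks) i = Acount ks i"
proof -
  have "count (msetnz ks) i = (\<Sum>y\<in>(\<lambda>m. ks ! m) -` {i} \<inter> nonempty_boxes ks. 1)"
    unfolding msetnz_def count_image_mset using finite_nb
    by (intro sum.cong) (auto simp: count_mset_set)
  also have "\<dots> = card ((\<lambda>m. ks ! m) -` {i} \<inter> nonempty_boxes ks)" by simp
  also have "(\<lambda>m. ks ! m) -` {i} \<inter> nonempty_boxes ks = {m. m < length ks \<and> ks ! m = i}"
    using assms by (auto simp: nonempty_boxes_def)
  finally show ?thesis by (simp add: Acount_def)
qed

lemma count_rsum: "finite I \<Longrightarrow> count (\<Sum>i\<in>I. replicate_mset (f i) i) x = (if x \<in> I then f x else 0)"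
  by (simp add: count_sum)

lemma rsum_facts:
  assumes "finite I"
  shows "sum_mset (\<Sum>i\<in>I. replicate_mset (f i) (i::nat)) = (\<Sum>i\<in>I. f i * i)"
    "size (\<Sum>i\<in>I. replicate_mset (f i) i) = (\<Sum>i\<in>I. f i)"
    "prod_mset (image_mset (c::nat \<Rightarrow> real) (\<Sum>i\<in>I. replicate_mset (f i) i)) = (\<Prod>i\<in>I. c i ^ f i)"
  using assms by (induction I rule: finite_induct) auto

lemma pgf_identity:
  assumes "k \<ge> 1"
  shows "(\<Sum>p\<le>k. g ^ p / sigma \<phi> k g * bellB \<phi> k p * u ^ p) = sigma \<phi> k (g * u) / sigma \<phi> k g"
proof -
  have e: "{..k} = insert 0 {1..k}" by auto
  have "(\<Sum>p\<le>k. g ^ p / sigma \<phi> k g * bellB \<phi> k p * u ^ p) = (\<Sum>p=1..k. g ^ p / sigma \<phi> k g * bellB \<phi> k p * u ^ p)"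
    unfolding e using assms by (subst sum.insert) (auto simp: bellB_zero)
  also have "\<dots> = (\<Sum>p=1..k. bellB \<phi> k p * (g * u) ^ p) / sigma \<phi> k g"
    by (simp add: sum_divide_distrib power_mult_distrib ac_simps)
  also have "\<dots> = sigma \<phi> k (g * u) / sigma \<phi> k g" using assms by (simp add: sigma_def)
  finally show ?thesis .
qed

lemma mean_identity:
  assumes "k \<ge> 1"
  shows "(\<Sum>p\<le>k. real p * (g ^ p / sigma \<phi> k g * bellB \<phi> k p)) = g * deriv (sigma \<phi> k) g / sigma \<phi> k g"
proof -
  have f: "sigma \<phi> k = (\<lambda>x. \<Sum>l=1..k. bellB \<phi> k l * x ^ l)" using assms by (auto simp: sigma_def)
  have "((\<lambda>x. \<Sum>l=1..k. bellB \<phi> k l * x ^ l) has_real_derivative (\<Sum>l=1..k. bellB \<phi> k l * (real l * g ^ (l - 1)))) (at g)"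
    by (intro derivative_eq_intros) auto
  then have d: "deriv (sigma \<phi> k) g = (\<Sum>l=1..k. bellB \<phi> k l * (real l * g ^ (l - 1)))"
    unfolding f by (rule DERIV_imp_deriv)
  have dd: "g * deriv (sigma \<phi> k) g = (\<Sum>l=1..k. real l * g ^ l * bellB \<phi> k l)"
    unfolding d sum_distrib_left
  proof (intro sum.cong refl)
    fix l assume "l \<in> {1..k}"
    then have "g * g ^ (l - 1) = g ^ l" by (cases l) auto
    then show "g * (bellB \<phi> k l * (real l * g ^ (l - 1))) = real l * g ^ l * bellB \<phi> k l"
      by (metis mult.commute mult.left_commute)
  qed
  have e: "{..k} = insert 0 {1..k}" by auto
  have "(\<Sum>p\<le>k. real p * (g ^ p / sigma \<phi> k g * bellB \<phi> k p)) = (\<Sum>p=1..k. real p * (g ^ p / sigma \<phi> k g * bellB \<phi> k p))"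
    unfolding e by (subst sum.insert) auto
  also have "\<dots> = (\<Sum>l=1..k. real l * g ^ l * bellB \<phi> k l) / sigma \<phi> k g"
    by (simp add: sum_divide_distrib ac_simps)
  also have "\<dots> = g * deriv (sigma \<phi> k) g / sigma \<phi> k g" using dd by simp
  finally show ?thesis .
qed

locale setting =
  fixes \<phi> :: "nat \<Rightarrow> real" and k :: nat and \<gamma> :: real and \<theta> :: "nat \<Rightarrow> real"
  assumes phi_nonneg: "\<And>m. m \<ge> 1 \<Longrightarrow> \<phi> m \<ge> 0"
    and phi1: "\<phi> 1 > 0"
    and k: "k \<ge> 1" and \<gamma>: "\<gamma> > 0"
    and \<theta>_pos: "\<And>n. \<theta> n > 0"
    and \<theta>_lim: "\<theta> \<longlonglongrightarrow> 0"
    and n\<theta>_lim: "(\<lambda>n. real n * \<theta> n) \<longlonglongrightarrow> \<gamma>"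
begin

lemma sg: "sigma \<phi> k \<gamma> > 0" by (rule sigma_pos) (use phi_nonneg phi1 \<gamma> in auto)

lemma hlim:
  assumes "\<forall>x\<in>set kk. 0 < x" "sum_list kk = k"
  shows "(\<lambda>n. hatK_prob \<phi> n k (\<theta> n) kk) \<longlonglongrightarrow>
          fact k / fact (length kk) * \<gamma> ^ length kk / sigma \<phi> k \<gamma>
            * (\<Prod>q<length kk. \<phi> (kk ! q) / fact (kk ! q))"
  by (rule hatK_lim) (use phi_nonneg phi1 k \<gamma> \<theta>_pos \<theta>_lim n\<theta>_lim assms in auto)

lemma Pnum_lim:
  "(\<lambda>n. Kev \<phi> n k (\<theta> n) (\<lambda>ks. Pnum ks = p)) \<longlonglongrightarrow> \<gamma> ^ p / sigma \<phi> k \<gamma> * bellB \<phi> k p"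
proof -
  define F where "F = (\<lambda>M::nat multiset. size M = p)"
  have dec: "Kev \<phi> n k (\<theta> n) (\<lambda>ks. Pnum ks = p) = (\<Sum>kk\<in>SF k F. hatK_prob \<phi> n k (\<theta> n) kk)" for n
    by (rule Kev_decomp) (simp add: F_def size_msetnz)
  have SFW: "SF k F = W p k" unfolding SF_def W_def F_def by auto
  have l: "(\<lambda>n. \<Sum>kk\<in>SF k F. hatK_prob \<phi> n k (\<theta> n) kk) \<longlonglongrightarrow>
      (\<Sum>kk\<in>SF k F. fact k / fact (length kk) * \<gamma> ^ length kk / sigma \<phi> k \<gamma>
            * (\<Prod>q<length kk. \<phi> (kk ! q) / fact (kk ! q)))"
    by (intro tendsto_sum hlim) (auto simp: SF_def)
  have "(\<Sum>kk\<in>SF k F. fact k / fact (length kk) * \<gamma> ^ length kk / sigma \<phi> k \<gamma>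
            * (\<Prod>q<length kk. \<phi> (kk ! q) / fact (kk ! q)))
      = (\<Sum>kk\<in>W p k. \<gamma> ^ p / sigma \<phi> k \<gamma> * (fact k / fact p *
            prod_list (map (\<lambda>j. if j = 0 then 0 else \<phi> j / fact j) kk)))"
    unfolding SFW by (intro sum.cong refl) (auto simp: W_def cprod_pos ac_simps)
  also have "\<dots> = \<gamma> ^ p / sigma \<phi> k \<gamma> * bellB \<phi> k p"
    unfolding bellB_W by (simp add: sum_distrib_left)
  finally show ?thesis using l unfolding dec by simp
qed

lemma A_lim:
  assumes ak: "(\<Sum>i=1..k. i * a i) = k" and ap: "p = (\<Sum>i=1..k. a i)"
  shows "(\<lambda>n. Kev \<phi> n k (\<theta> n) (\<lambda>ks. (\<forall>i\<in>{1..k}. Acount ks i = a i) \<and> Pnum ks = p))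
          \<longlonglongrightarrow> \<gamma> ^ p * fact k / sigma \<phi> k \<gamma>
                * (\<Prod>i=1..k. (\<phi> i / fact i) ^ a i / fact (a i))"
proof -
  define F where "F = (\<lambda>M::nat multiset. (\<forall>i\<in>{1..k}. count M i = a i) \<and> size M = p)"
  define A where "A = (\<Sum>i\<in>{1..k}. replicate_mset (a i) i)"
  define Q where "Q = (\<Prod>i=1..k. (\<phi> i / fact i) ^ a i)"
  define G where "G = (\<Prod>i=1..k. fact (a i) :: real)"
  have cA: "count A x = (if x \<in> {1..k} then a x else 0)" for x unfolding A_def by (rule count_rsum) simp
  have sA: "sum_mset A = k" unfolding A_def using ak by (simp add: rsum_facts mult.commute)
  have zA: "size A = p" unfolding A_def using ap by (simp add: rsum_facts)
  have dec: "Kev \<phi> n k (\<theta> n) (\<lambda>ks. (\<forall>i\<in>{1..k}. Acount ks i = a i) \<and> Pnum ks = p)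
      = (\<Sum>kk\<in>SF k F. hatK_prob \<phi> n k (\<theta> n) kk)" for n
    by (rule Kev_decomp) (simp add: F_def size_msetnz count_msetnz)
  have SFeq: "SF k F = permutations_of_multiset A"
  proof (intro set_eqI iffI)
    fix kk assume kk: "kk \<in> SF k F"
    have pos: "\<forall>x\<in>set kk. 0 < x" "sum_list kk = k" "F (mset kk)" using kk by (auto simp: SF_def)
    have sub: "x \<in> set kk \<Longrightarrow> x \<in> {1..k}" for x
      using pos(1,2) member_le_sum_list[of x kk] by (auto simp: Suc_le_eq)
    have "mset kk = A"
    proof (rule multiset_eqI)
      fix x show "count (mset kk) x = count A x"
      proof (cases "x \<in> {1..k}")
        case True then show ?thesis using pos(3) cA unfolding F_def by simp
      next
        case False then have "x \<notin> set kk" using sub by blast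
        then have c0: "count (mset kk) x = 0" by (simp add: count_mset_0_iff)
        have "count A x = 0" using False cA[of x] by auto
        then show ?thesis using c0 by (simp only:)
      qed
    qed
    then show "kk \<in> permutations_of_multiset A" by (simp add: permutations_of_multiset_def)
  next
    fix kk assume "kk \<in> permutations_of_multiset A"
    then have m: "mset kk = A" by (simp add: permutations_of_multiset_def)
    have pos: "\<forall>x\<in>set kk. 0 < x"
    proof
      fix x assume "x \<in> set kk"
      then have "count A x > 0" using m by (metis count_greater_zero_iff set_mset_mset)
      then show "0 < x" using cA[of x] by (auto split: if_splits)
    qed
    have "sum_list kk = k" using sA m by (metis sum_mset_sum_list)
    moreover have "F (mset kk)" unfolding F_def m using cA zA by simp
    ultimately show "kk \<in> SF k F" using pos by (simp add: SF_def)
  qed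
  have l: "(\<lambda>n. \<Sum>kk\<in>SF k F. hatK_prob \<phi> n k (\<theta> n) kk) \<longlonglongrightarrow>
      (\<Sum>kk\<in>SF k F. fact k / fact (length kk) * \<gamma> ^ length kk / sigma \<phi> k \<gamma>
            * (\<Prod>q<length kk. \<phi> (kk ! q) / fact (kk ! q)))"
    by (intro tendsto_sum hlim) (auto simp: SF_def)
  have val: "fact k / fact (length kk) * \<gamma> ^ length kk / sigma \<phi> k \<gamma>
            * (\<Prod>q<length kk. \<phi> (kk ! q) / fact (kk ! q)) = fact k / fact p * \<gamma> ^ p / sigma \<phi> k \<gamma> * Q"
    if kk: "kk \<in> permutations_of_multiset A" for kk
  proof -
    have m: "mset kk = A" using kk by (simp add: permutations_of_multiset_def)
    have len: "length kk = p" using zA m by (metis size_mset)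
    have pos: "\<forall>x\<in>set kk. 0 < x" using kk SFeq by (auto simp: SF_def)
    have "(\<Prod>q<length kk. \<phi> (kk ! q) / fact (kk ! q))
        = prod_mset (image_mset (\<lambda>j. if j = 0 then 0 else \<phi> j / fact j) (mset kk))"
      unfolding cprod_pos[OF pos] by (simp flip: prod_mset_prod_list)
    also have "\<dots> = (\<Prod>i=1..k. (if i = 0 then 0 else \<phi> i / fact i) ^ a i)"
      unfolding m A_def by (simp add: rsum_facts)
    also have "\<dots> = Q" unfolding Q_def by (intro prod.cong refl) auto
    finally show ?thesis using len by simp
  qed
  have cardA: "real (card (permutations_of_multiset A)) * G = fact p"
  proof -
    have "(\<Prod>x\<in>set_mset A. fact (count A x)) = (\<Prod>x\<in>{1..k}. fact (count A x) :: nat)"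
    proof (rule prod.mono_neutral_left)
      show "finite {1..k}" by simp
      show "set_mset A \<subseteq> {1..k}"
      proof
        fix x assume "x \<in># A"
        then have "count A x > 0" by simp
        then show "x \<in> {1..k}" using cA[of x] by (auto split: if_splits)
      qed
      show "\<forall>i\<in>{1..k} - set_mset A. fact (count A i) = (1::nat)"
        by (auto simp: not_in_iff)
    qed
    also have "\<dots> = (\<Prod>x\<in>{1..k}. fact (a x))" using cA by (intro prod.cong refl) auto
    finally have "card (permutations_of_multiset A) * (\<Prod>x\<in>{1..k}. fact (a x)) = fact p"
      using card_permutations_of_multiset_aux[of A] zA by simp
    then have "real (card (permutations_of_multiset A) * (\<Prod>x\<in>{1..k}. fact (a x))) = fact p"
      by (metis of_nat_fact)
    then show ?thesis unfolding G_def by simp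
  qed
  have Gpos: "G > 0" unfolding G_def by (intro prod_pos) auto
  have "(\<Sum>kk\<in>SF k F. fact k / fact (length kk) * \<gamma> ^ length kk / sigma \<phi> k \<gamma>
            * (\<Prod>q<length kk. \<phi> (kk ! q) / fact (kk ! q)))
       = real (card (permutations_of_multiset A)) * (fact k / fact p * \<gamma> ^ p / sigma \<phi> k \<gamma> * Q)"
    unfolding SFeq using val by simp
  also have "\<dots> = \<gamma> ^ p * fact k / sigma \<phi> k \<gamma> * (Q / G)"
  proof -
    have c: "real (card (permutations_of_multiset A)) = fact p / G" using cardA Gpos by (simp add: field_simps)
    show ?thesis unfolding c by (simp add: field_simps)
  qed
  also have "Q / G = (\<Prod>i=1..k. (\<phi> i / fact i) ^ a i / fact (a i))"
    unfolding Q_def G_def by (simp add: prod_dividef)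
  finally show ?thesis using l unfolding dec by simp
qed

end


theorem proposition7:
  fixes \<phi> :: "nat \<Rightarrow> real" and k :: nat and \<gamma> :: real and \<theta> :: "nat \<Rightarrow> real"
  assumes phi_nonneg: "\<And>m. m \<ge> 1 \<Longrightarrow> \<phi> m \<ge> 0"
    and phi1: "\<phi> 1 > 0"
    and radius: "\<exists>r>0. summable (\<lambda>m. \<phi> m / fact m * r ^ m)"
    and k: "k \<ge> 1" and \<gamma>: "\<gamma> > 0"
    and \<theta>_pos: "\<And>n. \<theta> n > 0"
    and \<theta>_lim: "\<theta> \<longlonglongrightarrow> 0"
    and n\<theta>_lim: "(\<lambda>n. real n * \<theta> n) \<longlonglongrightarrow> \<gamma>"
  shows
    \<comment> \<open>(1)\<close>
    "(\<forall>kk. length kk \<le> k \<and> (\<forall>q<length kk. kk ! q \<ge> 1) \<and> sum_list kk = k \<longrightarrow>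
        (\<lambda>n. hatK_prob \<phi> n k (\<theta> n) kk) \<longlonglongrightarrow>
          fact k / fact (length kk) * \<gamma> ^ length kk / sigma \<phi> k \<gamma>
            * (\<Prod>q<length kk. \<phi> (kk ! q) / fact (kk ! q)))
   \<and> \<comment> \<open>(2)\<close>
    (\<forall>p\<le>k. (\<lambda>n. Kev \<phi> n k (\<theta> n) (\<lambda>ks. Pnum ks = p)) \<longlonglongrightarrow>
        \<gamma> ^ p / sigma \<phi> k \<gamma> * bellB \<phi> k p)
   \<and> (\<forall>u::real. (\<Sum>p\<le>k. \<gamma> ^ p / sigma \<phi> k \<gamma> * bellB \<phi> k p * u ^ p)
                 = sigma \<phi> k (\<gamma> * u) / sigma \<phi> k \<gamma>)
   \<and> (\<Sum>p\<le>k. real p * (\<gamma> ^ p / sigma \<phi> k \<gamma> * bellB \<phi> k p))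
        = \<gamma> * deriv (sigma \<phi> k) \<gamma> / sigma \<phi> k \<gamma>
   \<and> \<comment> \<open>(3)\<close>
    (\<forall>kk. length kk \<le> k \<and> (\<forall>q<length kk. kk ! q \<ge> 1) \<and> sum_list kk = k
          \<and> bellB \<phi> k (length kk) > 0 \<longrightarrow>
        (\<lambda>n. hatK_prob \<phi> n k (\<theta> n) kk
               / Kev \<phi> n k (\<theta> n) (\<lambda>ks. Pnum ks = length kk)) \<longlonglongrightarrow>
          fact k / fact (length kk) / bellB \<phi> k (length kk)
            * (\<Prod>q<length kk. \<phi> (kk ! q) / fact (kk ! q)))
   \<and> \<comment> \<open>(4)\<close>
    (\<forall>(a::nat \<Rightarrow> nat) p. (\<Sum>i=1..k. i * a i) = k \<and> p = (\<Sum>i=1..k. a i) \<longrightarrow>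
        (\<lambda>n. Kev \<phi> n k (\<theta> n) (\<lambda>ks. (\<forall>i\<in>{1..k}. Acount ks i = a i) \<and> Pnum ks = p))
          \<longlonglongrightarrow> \<gamma> ^ p * fact k / sigma \<phi> k \<gamma>
                * (\<Prod>i=1..k. (\<phi> i / fact i) ^ a i / fact (a i)))
   \<and> (\<forall>(a::nat \<Rightarrow> nat) p. (\<Sum>i=1..k. i * a i) = k \<and> p = (\<Sum>i=1..k. a i)
          \<and> bellB \<phi> k p > 0 \<longrightarrow>
        (\<lambda>n. Kev \<phi> n k (\<theta> n) (\<lambda>ks. (\<forall>i\<in>{1..k}. Acount ks i = a i) \<and> Pnum ks = p)
               / Kev \<phi> n k (\<theta> n) (\<lambda>ks. Pnum ks = p))
          \<longlonglongrightarrow> fact k / bellB \<phi> k p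
                * (\<Prod>i=1..k. (\<phi> i / fact i) ^ a i / fact (a i)))"
proof -
  interpret setting \<phi> k \<gamma> \<theta>
    by unfold_locales (use phi_nonneg phi1 k \<gamma> \<theta>_pos \<theta>_lim n\<theta>_lim in auto)
  have pos_of: "\<forall>x\<in>set kk. 0 < x" if "\<forall>q<length kk. kk ! q \<ge> 1" for kk :: "nat list"
    using that by (auto simp: in_set_conv_nth Suc_le_eq)
  have P1: "\<forall>kk. length kk \<le> k \<and> (\<forall>q<length kk. kk ! q \<ge> 1) \<and> sum_list kk = k \<longrightarrow>
        (\<lambda>n. hatK_prob \<phi> n k (\<theta> n) kk) \<longlonglongrightarrow>
          fact k / fact (length kk) * \<gamma> ^ length kk / sigma \<phi> k \<gamma>
            * (\<Prod>q<length kk. \<phi> (kk ! q) / fact (kk ! q))"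
    using hlim pos_of by blast
  have P2: "\<forall>p\<le>k. (\<lambda>n. Kev \<phi> n k (\<theta> n) (\<lambda>ks. Pnum ks = p)) \<longlonglongrightarrow>
        \<gamma> ^ p / sigma \<phi> k \<gamma> * bellB \<phi> k p"
    using Pnum_lim by blast
  have P3: "\<forall>kk. length kk \<le> k \<and> (\<forall>q<length kk. kk ! q \<ge> 1) \<and> sum_list kk = k
          \<and> bellB \<phi> k (length kk) > 0 \<longrightarrow>
        (\<lambda>n. hatK_prob \<phi> n k (\<theta> n) kk
               / Kev \<phi> n k (\<theta> n) (\<lambda>ks. Pnum ks = length kk)) \<longlonglongrightarrow>
          fact k / fact (length kk) / bellB \<phi> k (length kk)
            * (\<Prod>q<length kk. \<phi> (kk ! q) / fact (kk ! q))"
  proof (intro allI impI)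
    fix kk :: "nat list"
    assume h: "length kk \<le> k \<and> (\<forall>q<length kk. kk ! q \<ge> 1) \<and> sum_list kk = k \<and> bellB \<phi> k (length kk) > 0"
    have pos: "\<forall>x\<in>set kk. 0 < x" using pos_of h by blast
    have nz: "\<gamma> ^ length kk / sigma \<phi> k \<gamma> * bellB \<phi> k (length kk) \<noteq> 0"
      using h sg \<gamma> by simp
    have l: "(\<lambda>n. hatK_prob \<phi> n k (\<theta> n) kk / Kev \<phi> n k (\<theta> n) (\<lambda>ks. Pnum ks = length kk)) \<longlonglongrightarrow>
        (fact k / fact (length kk) * \<gamma> ^ length kk / sigma \<phi> k \<gamma>
            * (\<Prod>q<length kk. \<phi> (kk ! q) / fact (kk ! q))) / (\<gamma> ^ length kk / sigma \<phi> k \<gamma> * bellB \<phi> k (length kk))"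
      by (rule tendsto_divide[OF hlim[OF pos] Pnum_lim nz]) (use h in auto)
    have v: "(fact k / fact (length kk) * \<gamma> ^ length kk / sigma \<phi> k \<gamma>
            * (\<Prod>q<length kk. \<phi> (kk ! q) / fact (kk ! q))) / (\<gamma> ^ length kk / sigma \<phi> k \<gamma> * bellB \<phi> k (length kk))
        = fact k / fact (length kk) / bellB \<phi> k (length kk) * (\<Prod>q<length kk. \<phi> (kk ! q) / fact (kk ! q))"
      using h sg \<gamma> by (simp add: field_simps)
    show "(\<lambda>n. hatK_prob \<phi> n k (\<theta> n) kk / Kev \<phi> n k (\<theta> n) (\<lambda>ks. Pnum ks = length kk)) \<longlonglongrightarrow>
          fact k / fact (length kk) / bellB \<phi> k (length kk) * (\<Prod>q<length kk. \<phi> (kk ! q) / fact (kk ! q))"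
      using l unfolding v .
  qed
  have P4: "\<forall>(a::nat \<Rightarrow> nat) p. (\<Sum>i=1..k. i * a i) = k \<and> p = (\<Sum>i=1..k. a i) \<longrightarrow>
        (\<lambda>n. Kev \<phi> n k (\<theta> n) (\<lambda>ks. (\<forall>i\<in>{1..k}. Acount ks i = a i) \<and> Pnum ks = p))
          \<longlonglongrightarrow> \<gamma> ^ p * fact k / sigma \<phi> k \<gamma>
                * (\<Prod>i=1..k. (\<phi> i / fact i) ^ a i / fact (a i))"
    using A_lim by blast
  have P5: "\<forall>(a::nat \<Rightarrow> nat) p. (\<Sum>i=1..k. i * a i) = k \<and> p = (\<Sum>i=1..k. a i)
          \<and> bellB \<phi> k p > 0 \<longrightarrow>
        (\<lambda>n. Kev \<phi> n k (\<theta> n) (\<lambda>ks. (\<forall>i\<in>{1..k}. Acount ks i = a i) \<and> Pnum ks = p)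
               / Kev \<phi> n k (\<theta> n) (\<lambda>ks. Pnum ks = p))
          \<longlonglongrightarrow> fact k / bellB \<phi> k p
                * (\<Prod>i=1..k. (\<phi> i / fact i) ^ a i / fact (a i))"
  proof (intro allI impI)
    fix a :: "nat \<Rightarrow> nat" and p
    assume h: "(\<Sum>i=1..k. i * a i) = k \<and> p = (\<Sum>i=1..k. a i) \<and> bellB \<phi> k p > 0"
    have bp: "bellB \<phi> k p > 0" using h by blast
    have nz: "\<gamma> ^ p / sigma \<phi> k \<gamma> * bellB \<phi> k p \<noteq> 0" using bp sg \<gamma> by simp
    have l: "(\<lambda>n. Kev \<phi> n k (\<theta> n) (\<lambda>ks. (\<forall>i\<in>{1..k}. Acount ks i = a i) \<and> Pnum ks = p)
               / Kev \<phi> n k (\<theta> n) (\<lambda>ks. Pnum ks = p)) \<longlonglongrightarrow>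
         (\<gamma> ^ p * fact k / sigma \<phi> k \<gamma> * (\<Prod>i=1..k. (\<phi> i / fact i) ^ a i / fact (a i)))
           / (\<gamma> ^ p / sigma \<phi> k \<gamma> * bellB \<phi> k p)"
      by (rule tendsto_divide[OF A_lim Pnum_lim nz]) (use h in auto)
    have v: "(\<gamma> ^ p * fact k / sigma \<phi> k \<gamma> * (\<Prod>i=1..k. (\<phi> i / fact i) ^ a i / fact (a i)))
           / (\<gamma> ^ p / sigma \<phi> k \<gamma> * bellB \<phi> k p)
        = fact k / bellB \<phi> k p * (\<Prod>i=1..k. (\<phi> i / fact i) ^ a i / fact (a i))"
      using bp sg \<gamma> by (simp add: field_simps)
    show "(\<lambda>n. Kev \<phi> n k (\<theta> n) (\<lambda>ks. (\<forall>i\<in>{1..k}. Acount ks i = a i) \<and> Pnum ks = p)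
               / Kev \<phi> n k (\<theta> n) (\<lambda>ks. Pnum ks = p))
          \<longlonglongrightarrow> fact k / bellB \<phi> k p * (\<Prod>i=1..k. (\<phi> i / fact i) ^ a i / fact (a i))"
      using l unfolding v .
  qed
  show ?thesis
    using P1 P2 pgf_identity[OF k] mean_identity[OF k] P3 P4 P5 by blast
qed

end
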